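(* Consider the Diophantine equation $n^2-(12s-5)n+12s^2=0$ in positive integers $(n,s)$. The maps $\iota_1(n,s)=(n,n-s)$ and $\iota_2(n,s)=(12s-5-n,s)$ send positive integer solutions to positive integer solutions, and the set of all positive integer solutions is exactly the set of pairs obtained from $(3,1)$ by finitely many applications of $\iota_1$ and $\iota_2$. Explicitly, these are the pairs of the two-sided chain $\dots,(1444,1311),(1444,133),(147,133),(147,14),(16,14),(16,2),(3,2),(3,1),(4,1),(4,3),(27,3),(27,24),(256,24),(256,232),(2523,232),\dots$ in which consecutive pairs are related alternately by $\iota_1$ and $\iota_2$. *)

theory Defs
  imports Main
begin

definition sol :: "int \<times> int \<Rightarrow> bool" where
  "sol p = (case p of (n, s) \<Rightarrow> n > 0 \<and> s > 0 \<and> n^2 - (12*s - 5)*n + 12*s^2 = 0)"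

definition iota1 :: "int \<times> int \<Rightarrow> int \<times> int" where
  "iota1 p = (case p of (n, s) \<Rightarrow> (n, n - s))"

definition iota2 :: "int \<times> int \<Rightarrow> int \<times> int" where
  "iota2 p = (case p of (n, s) \<Rightarrow> (12*s - 5 - n, s))"

inductive_set generated :: "(int \<times> int) set" where
  base: "(3, 1) \<in> generated"
| step1: "p \<in> generated \<Longrightarrow> iota1 p \<in> generated"
| step2: "p \<in> generated \<Longrightarrow> iota2 p \<in> generated"

end

theory Submission
  imports Defs
begin

lemma sol_iota1: "sol p \<Longrightarrow> sol (iota1 p)"
proof (cases p)
  case (Pair n s)
  assume h: "sol p"
  hence n: "n > 0" "s > 0" and e: "n^2 - (12*s - 5)*n + 12*s^2 = 0" using Pair by (auto simp: sol_def)
  have e2: "s * (n - s) * 12 = n^2 + 5*n" using e by (simp add: algebra_simps power2_eq_square)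
  have "n*n > 0" using n by simp
  hence "n^2 + 5*n > 0" using n unfolding power2_eq_square by linarith
  hence "s * (n - s) > 0" using e2 by linarith
  hence "n - s > 0" using n zero_less_mult_pos by blast
  moreover have "n^2 - (12*(n-s) - 5)*n + 12*(n-s)^2 = 0" using e by (simp add: algebra_simps power2_eq_square)
  ultimately show ?thesis using Pair n by (simp add: sol_def iota1_def)
qed

lemma sol_iota2: "sol p \<Longrightarrow> sol (iota2 p)"
proof (cases p)
  case (Pair n s)
  assume h: "sol p"
  hence n: "n > 0" "s > 0" and e: "n^2 - (12*s - 5)*n + 12*s^2 = 0" using Pair by (auto simp: sol_def)
  have e2: "n * (12*s - 5 - n) = 12*s^2" using e by (simp add: algebra_simps power2_eq_square)
  have "12*s^2 > 0" using n by simp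
  hence "12*s - 5 - n > 0" using e2 n zero_less_mult_pos by metis
  moreover have "(12*s-5-n)^2 - (12*s - 5)*(12*s-5-n) + 12*s^2 = 0" using e by (simp add: algebra_simps power2_eq_square)
  ultimately show ?thesis using Pair n by (simp add: sol_def iota2_def)
qed

lemma gen_sol: "p \<in> generated \<Longrightarrow> sol p"
proof (induction rule: generated.induct)
  case base thus ?case by (simp add: sol_def)
next
  case (step1 p) thus ?case by (simp add: sol_iota1)
next
  case (step2 p) thus ?case by (simp add: sol_iota2)
qed

lemma sol_gen_aux: "sol (n, s) \<Longrightarrow> (n, s) \<in> generated"
proof (induction "nat n" arbitrary: n s rule: less_induct)
  case less
  have n: "n > 0" "s > 0" and e: "n^2 - (12*s - 5)*n + 12*s^2 = 0" using less.prems by (auto simp: sol_def)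
  have A: "(n, t) \<in> generated" if st: "sol (n,t)" "2*t < n" for t
  proof -
    have t: "t > 0" and et: "n^2 - (12*t - 5)*n + 12*t^2 = 0" using st by (auto simp: sol_def)
    define m where "m = 12*t - 5 - n"
    have nm: "n * m = 12*t^2" using et by (simp add: m_def algebra_simps power2_eq_square)
    show ?thesis
    proof (cases "t = 1")
      case True
      hence "n^2 - 7*n + 12 = 0" using et by simp
      hence "(n - 3) * (n - 4) = 0" by (simp add: algebra_simps power2_eq_square)
      hence "n = 3 \<or> n = 4" by auto
      moreover have "iota2 (3,1) = (4,(1::int))" by (simp add: iota2_def)
      ultimately show ?thesis using True generated.base generated.step2[OF generated.base] by auto
    next
      case False
      hence t2: "t \<ge> 2" using t by simp
      have "m < n"
      proof (rule ccontr)
        assume "\<not> m < n"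
        hence "(n - 2*t) * (m - 2*t) > 0" using st(2) by (simp add: mult_pos_pos)
        hence "n*m > 2*t*(n+m) - 4*t^2" by (simp add: algebra_simps power2_eq_square)
        hence "12*t^2 > 2*t*(12*t-5) - 4*t^2" using nm by (simp add: m_def)
        hence "0 > 8*t*t - 10*t" by (simp add: algebra_simps power2_eq_square)
        moreover have "8*t*t \<ge> 16*t" using t2 t by simp
        ultimately show False using t by linarith
      qed
      have sm: "sol (m, t)" using sol_iota2[OF st(1)] by (simp add: iota2_def m_def)
      hence "m > 0" by (simp add: sol_def)
      hence "(m, t) \<in> generated" using less.hyps[OF _ sm] \<open>m < n\<close> by simp
      hence "iota2 (m, t) \<in> generated" by (rule generated.step2)
      thus ?thesis by (simp add: iota2_def m_def)
    qed
  qed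
  show ?case
  proof (cases "2*s < n")
    case True thus ?thesis using A less.prems by blast
  next
    case False
    have "2*s \<noteq> n"
    proof
      assume h: "2*s = n"
      have "(2*s)^2 - (12*s-5)*(2*s) + 12*s^2 = 0" using e h by simp
      hence "s * (10 - 8*s) = 0" by (simp add: algebra_simps power2_eq_square)
      hence "10 - 8*s = 0" using n by simp
      thus False by presburger
    qed
    have s1: "sol (n, n - s)" using sol_iota1[OF less.prems] by (simp add: iota1_def)
    have "(n, n - s) \<in> generated" using A[OF s1] False \<open>2*s \<noteq> n\<close> by simp
    hence "iota1 (n, n - s) \<in> generated" by (rule generated.step1)
    thus ?thesis by (simp add: iota1_def)
  qed
qed

theorem mainTheorem11:
  shows "(\<forall>p. sol p \<longrightarrow> sol (iota1 p))
    \<and> (\<forall>p. sol p \<longrightarrow> sol (iota2 p))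
    \<and> {p. sol p} = generated
    \<and> (\<forall>p \<in> set [(1444,1311),(1444,133),(147,133),(147,14),(16,14),(16,2),(3,2),(3,1),
                 (4,1),(4,3),(27,3),(27,24),(256,24),(256,232),(2523,232)]. sol p)
    \<and> iota1 (1444,1311) = (1444,133) \<and> iota2 (1444,133) = (147,133)
    \<and> iota1 (147,133) = (147,14) \<and> iota2 (147,14) = (16,14)
    \<and> iota1 (16,14) = (16,2) \<and> iota2 (16,2) = (3,2)
    \<and> iota1 (3,2) = (3,1) \<and> iota2 (3,1) = (4,1)
    \<and> iota1 (4,1) = (4,3) \<and> iota2 (4,3) = (27,3)
    \<and> iota1 (27,3) = (27,24) \<and> iota2 (27,24) = (256,24)
    \<and> iota1 (256,24) = (256,232) \<and> iota2 (256,232) = (2523,232)"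
proof -
  have "{p. sol p} = generated"
    using gen_sol sol_gen_aux by auto
  thus ?thesis using sol_iota1 sol_iota2
    by (simp add: sol_def iota1_def iota2_def)
qed

end
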